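(* There is an absolute constant $C>0$ such that: if $w\ge0$ on $\mathbb{T}$ with $\|w\|_{BMO}=t$, $\|w^{-1}\|_{BMO}=s$ and $\|w\|_{L^1(\mathbb{T})}=1$, then \[ (2\pi)^2\le \|w^{-1}\|_{L^1(\mathbb{T})}\le C\bigl(1+(1+t)s\bigr). \]
   Context: $L^1$ norms are with respect to $d\theta$ on $\mathbb{T}\cong[-\pi,\pi]$. $\|f\|_{BMO}=\sup_I\frac1{|I|}\int_I|f-\langle f\rangle_I|d\theta$ over subarcs $I$. *)

theory Defs
  imports "HOL-Analysis.Analysis"
begin

text \<open>Functions on the circle are 2pi-periodic functions on the real line.
  A subarc of the circle is represented by a lifted interval [a,b] with
  0 < b - a \<le> 2 pi; arc length is the Lebesgue measure d theta.\<close>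

definition periodic_2pi :: "(real \<Rightarrow> real) \<Rightarrow> bool" where
  "periodic_2pi f \<longleftrightarrow> (\<forall>x. f (x + 2 * pi) = f x)"

definition arc_avg :: "(real \<Rightarrow> real) \<Rightarrow> real \<Rightarrow> real \<Rightarrow> real" where
  "arc_avg f a b = (LBINT x=a..b. f x) / (b - a)"

definition bmo_norm :: "(real \<Rightarrow> real) \<Rightarrow> ereal" where
  "bmo_norm f = (if (\<forall>a b. set_integrable lborel {a..b} f)
     then (SUP I \<in> {(a, b). a < b \<and> b \<le> a + 2 * pi}.
             ereal ((LBINT x=fst I..snd I. \<bar>f x - arc_avg f (fst I) (snd I)\<bar>) / (snd I - fst I)))
     else \<infinity>)"

definition L1_norm_T :: "(real \<Rightarrow> real) \<Rightarrow> real" where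
  "L1_norm_T f = (LBINT x=-pi..pi. \<bar>f x\<bar>)"

end

theory Submission
  imports Defs
begin



definition loc :: "(real \<Rightarrow> real) \<Rightarrow> bool" where
  "loc g \<longleftrightarrow> (\<forall>u v. set_integrable lborel {u..v} g)"

definition II :: "(real \<Rightarrow> real) \<Rightarrow> real \<Rightarrow> real \<Rightarrow> real" where
  "II g u v = (LBINT x:{u..v}. g x)"

definition av :: "(real \<Rightarrow> real) \<Rightarrow> real \<Rightarrow> real \<Rightarrow> real" where
  "av g u v = II g u v / (v - u)"

lemma loc_meas: assumes "loc g" shows "g \<in> borel_measurable borel"
proof -
  have m: "(\<lambda>x. indicator {-real n..real n} x * g x) \<in> borel_measurable borel" for n
  proof -
    have "integrable lborel (\<lambda>x. indicator {-real n..real n} x *\<^sub>R g x)"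
      using assms unfolding loc_def set_integrable_def by blast
    then have "(\<lambda>x. indicator {-real n..real n} x *\<^sub>R g x) \<in> borel_measurable lborel"
      by (rule borel_measurable_integrable)
    then show ?thesis by simp
  qed
  have "(\<lambda>n. indicator {-real n..real n} x * g x) \<longlonglongrightarrow> g x" for x
  proof (rule tendsto_eventually)
    obtain n where "\<bar>x\<bar> \<le> real n" using real_arch_simple by blast
    then show "\<forall>\<^sub>F n in sequentially. indicator {-real n..real n} x * g x = g x"
      unfolding eventually_sequentially
      by (intro exI[of _ n]) (auto simp: indicator_def)
  qed
  then show ?thesis by (rule borel_measurable_LIMSEQ_real[OF _ m])
qed

lemma II_split: assumes "loc g" "u \<le> m" "m \<le> v"
  shows "II g u v = II g u m + II g m v"
proof -
  have "{u..v} = {u..m} \<union> {m..v}" using assms by auto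
  moreover have "(LBINT x:{u..m} \<union> {m..v}. g x) = (LBINT x:{u..m}. g x) + (LBINT x:{m..v}. g x)"
  proof (rule set_integral_Un_AE)
    show "AE x in lborel. \<not> (x \<in> {u..m} \<and> x \<in> {m..v})"
      using AE_lborel_singleton[of m] by eventually_elim auto
  qed (use assms in \<open>auto simp: loc_def\<close>)
  ultimately show ?thesis unfolding II_def by simp
qed

lemma loc_add: "loc f \<Longrightarrow> loc g \<Longrightarrow> loc (\<lambda>x. f x + g x)"
  unfolding loc_def by auto
lemma loc_diff: "loc f \<Longrightarrow> loc g \<Longrightarrow> loc (\<lambda>x. f x - g x)"
  unfolding loc_def by (blast intro: set_integral_diff(1))
lemma loc_cmult: "loc f \<Longrightarrow> loc (\<lambda>x. c * f x)"
  unfolding loc_def by auto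
lemma loc_abs: "loc f \<Longrightarrow> loc (\<lambda>x. \<bar>f x\<bar>)"
  unfolding loc_def by (auto intro: set_integrable_abs)
lemma loc_bounded: assumes "g \<in> borel_measurable borel" "\<And>x. \<bar>g x\<bar> \<le> B" shows "loc g"
  unfolding loc_def set_integrable_def
proof (intro allI)
  fix u v :: real
  have "integrable lborel (\<lambda>x. indicator {u..v} x *\<^sub>R g x)"
    by (rule integrableI_bounded_set_indicator[where B=B]) (auto simp: assms emeasure_lborel_Icc_eq)
  then show "integrable lborel (\<lambda>x. indicator {u..v} x *\<^sub>R g x)" .
qed
lemma loc_const: "loc (\<lambda>x. c)"
  by (rule loc_bounded[where B="\<bar>c\<bar>"]) auto

lemma II_add: "loc f \<Longrightarrow> loc g \<Longrightarrow> II (\<lambda>x. f x + g x) u v = II f u v + II g u v"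
  unfolding loc_def II_def by auto
lemma II_diff: "loc f \<Longrightarrow> loc g \<Longrightarrow> II (\<lambda>x. f x - g x) u v = II f u v - II g u v"
  unfolding loc_def II_def by auto
lemma II_cmult: "II (\<lambda>x. c * f x) u v = c * II f u v"
  unfolding II_def by auto
lemma II_const: "u \<le> v \<Longrightarrow> II (\<lambda>x. c) u v = c * (v - u)"
  unfolding II_def by (subst set_integral_const) auto
lemma II_mono: "loc f \<Longrightarrow> loc g \<Longrightarrow> (\<And>x. u \<le> x \<Longrightarrow> x \<le> v \<Longrightarrow> f x \<le> g x) \<Longrightarrow> II f u v \<le> II g u v"
  unfolding loc_def II_def by (rule set_integral_mono) auto
lemma II_nonneg: "loc f \<Longrightarrow> (\<And>x. u \<le> x \<Longrightarrow> x \<le> v \<Longrightarrow> 0 \<le> f x) \<Longrightarrow> 0 \<le> II f u v"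
  using II_mono[of "\<lambda>x. 0" f u v] loc_const by (simp add: II_def)
lemma II_abs: "loc f \<Longrightarrow> \<bar>II f u v\<bar> \<le> II (\<lambda>x. \<bar>f x\<bar>) u v"
proof -
  assume f: "loc f"
  have "II f u v \<le> II (\<lambda>x. \<bar>f x\<bar>) u v" by (rule II_mono) (auto simp: f loc_abs)
  moreover have "II (\<lambda>x. - \<bar>f x\<bar>) u v \<le> II f u v" 
    by (rule II_mono) (auto simp: f loc_abs loc_cmult[of "\<lambda>x. \<bar>f x\<bar>" "-1", simplified])
  moreover have "II (\<lambda>x. - \<bar>f x\<bar>) u v = - II (\<lambda>x. \<bar>f x\<bar>) u v"
    using II_cmult[of "-1" "\<lambda>x. \<bar>f x\<bar>"] by simp
  ultimately show ?thesis by linarith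
qed

lemma av_const: "u < v \<Longrightarrow> av (\<lambda>x. c) u v = c"
  unfolding av_def using II_const[of u v c] by simp




fun Ld :: "(real \<Rightarrow> real) \<Rightarrow> nat \<Rightarrow> real \<Rightarrow> real \<Rightarrow> real \<Rightarrow> real" where
  "Ld f 0 c u v = (v - u) * (av f u v - c)^2"
| "Ld f (Suc h) c u v = Ld f h c u ((u+v)/2) + Ld f h c ((u+v)/2) v"

lemma halfavg: "d \<noteq> 0 \<Longrightarrow> (A + B)/d = (A/(d/2) + B/(d/2))/(2::real)"
  by (simp add: field_simps)

lemma av_split: assumes "loc f" "u < v"
  shows "av f u v = (av f u ((u+v)/2) + av f ((u+v)/2) v) / 2"
proof -
  have s: "II f u v = II f u ((u+v)/2) + II f ((u+v)/2) v"
    by (rule II_split) (use assms in auto)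
  have mu: "(u+v)/2 - u = (v-u)/2" "v - (u+v)/2 = (v-u)/2" by (simp_all add: field_simps)
  have d: "v - u \<noteq> 0" using assms by simp
  show ?thesis
    unfolding av_def s mu using halfavg[OF d] by simp
qed

lemma Ld_shift: assumes "loc f" "u < v"
  shows "Ld f h c u v = Ld f h (av f u v) u v + (v - u) * (av f u v - c)^2"
  using assms(2)
proof (induction h arbitrary: u v c)
  case 0
  then show ?case by simp
next
  case (Suc h)
  define m where "m = (u+v)/2"
  have um: "u < m" and mv: "m < v" using Suc.prems by (auto simp: m_def)
  define a1 where "a1 = av f u m"
  define a2 where "a2 = av f m v"
  have a: "av f u v = (a1 + a2)/2" unfolding a1_def a2_def m_def by (rule av_split[OF assms(1) Suc.prems])
  have e1: "Ld f h c u m = Ld f h a1 u m + (m - u) * (a1 - c)^2"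
    unfolding a1_def by (rule Suc.IH[OF um])
  have e2: "Ld f h c m v = Ld f h a2 m v + (v - m) * (a2 - c)^2"
    unfolding a2_def by (rule Suc.IH[OF mv])
  have e3: "Ld f h (av f u v) u m = Ld f h a1 u m + (m - u) * (a1 - av f u v)^2"
    unfolding a1_def by (rule Suc.IH[OF um])
  have e4: "Ld f h (av f u v) m v = Ld f h a2 m v + (v - m) * (a2 - av f u v)^2"
    unfolding a2_def by (rule Suc.IH[OF mv])
  have mu: "m - u = (v - u)/2" "v - m = (v - u)/2" by (auto simp: m_def field_simps)
  have alg: "(v-u)/2 * (a1 - c)^2 + (v-u)/2 * (a2 - c)^2
      = (v-u)/2 * (a1 - (a1+a2)/2)^2 + (v-u)/2 * (a2 - (a1+a2)/2)^2 + (v - u) * ((a1+a2)/2 - c)^2"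
    by (simp add: power2_eq_square field_simps)
  show ?case
    unfolding Ld.simps m_def[symmetric]
    using e1 e2 e3 e4 alg unfolding mu a by linarith
qed

lemma Ld_nonneg: "u \<le> v \<Longrightarrow> 0 \<le> Ld f h c u v"
proof (induction h arbitrary: u v)
  case 0
  then show ?case by simp
next
  case (Suc h)
  have "u \<le> (u+v)/2" "(u+v)/2 \<le> v" using Suc.prems by simp_all
  then show ?case using Suc.IH[of u "(u+v)/2"] Suc.IH[of "(u+v)/2" v] by simp
qed

lemma sq_le: assumes "\<bar>x\<bar> \<le> (k::real)" shows "x^2 \<le> k^2"
proof -
  have "\<bar>x\<bar>^2 \<le> k^2" by (rule power_mono) (use assms in auto)
  then show ?thesis by simp
qed

lemma II_half: assumes "loc g" "\<And>x. 0 \<le> g x" "u \<le> v"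
  shows "II g u ((u+v)/2) \<le> II g u v" "II g ((u+v)/2) v \<le> II g u v"
proof -
  have s: "II g u v = II g u ((u+v)/2) + II g ((u+v)/2) v"
    by (rule II_split) (use assms in auto)
  have "0 \<le> II g u ((u+v)/2)" "0 \<le> II g ((u+v)/2) v"
    by (auto intro!: II_nonneg assms)
  with s show "II g u ((u+v)/2) \<le> II g u v" "II g ((u+v)/2) v \<le> II g u v" by linarith+
qed

lemma av_dev: assumes "loc f" "u < v"
  shows "\<bar>av f u v - c\<bar> * (v - u) \<le> II (\<lambda>x. \<bar>f x - c\<bar>) u v"
proof -
  have "II (\<lambda>x. f x - c) u v = II f u v - c * (v - u)"
    using II_diff[OF assms(1) loc_const, of c u v] II_const[of u v c] assms(2) by simp
  then have "av f u v - c = II (\<lambda>x. f x - c) u v / (v - u)"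
    using assms(2) unfolding av_def by (simp add: field_simps)
  then have "\<bar>av f u v - c\<bar> * (v - u) = \<bar>II (\<lambda>x. f x - c) u v\<bar>"
    using assms(2) by (simp add: abs_divide)
  also have "\<dots> \<le> II (\<lambda>x. \<bar>f x - c\<bar>) u v"
    by (rule II_abs) (intro loc_diff assms loc_const)
  finally show ?thesis .
qed

locale bmo_int =
  fixes f :: "real \<Rightarrow> real" and a b s :: real
  assumes locf: "loc f" and spos: "s > 0"
    and osc: "\<And>u v. a \<le> u \<Longrightarrow> u < v \<Longrightarrow> v \<le> b \<Longrightarrow> II (\<lambda>x. \<bar>f x - av f u v\<bar>) u v \<le> s * (v - u)"
begin

definition PP :: "nat \<Rightarrow> bool" where
  "PP h \<longleftrightarrow> (\<forall>u v. a \<le> u \<longrightarrow> u < v \<longrightarrow> v \<le> b \<longrightarrow> Ld f h (av f u v) u v \<le> 24 * s^2 * (v - u))"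

lemma claim:
  assumes "\<forall>h'<h. PP h'"
  shows "\<forall>u v. a \<le> u \<longrightarrow> u < v \<longrightarrow> v \<le> b \<longrightarrow> II (\<lambda>x. \<bar>f x - c\<bar>) u v \<le> 2 * s * (v - u) \<longrightarrow>
     Ld f h c u v \<le> (4 * s^2) * (v - u) + 20 * s * II (\<lambda>x. \<bar>f x - c\<bar>) u v"
  using assms
proof (induction h)
  case 0
  show ?case
  proof (intro allI impI)
    fix u v assume uv: "a \<le> u" "u < v" "v \<le> b" and G: "II (\<lambda>x. \<bar>f x - c\<bar>) u v \<le> 2 * s * (v - u)"
    have d: "\<bar>av f u v - c\<bar> * (v - u) \<le> 2 * s * (v - u)" using av_dev[OF locf uv(2), of c] G by linarith
    then have d': "\<bar>av f u v - c\<bar> \<le> 2 * s" using uv(2) by simp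
    have "(av f u v - c)^2 \<le> (2 * s)^2" by (rule sq_le[OF d'])
    then have "(av f u v - c)^2 \<le> (4 * s^2)" by (simp add: power_mult_distrib)
    then have "(v - u) * (av f u v - c)^2 \<le> (4 * s^2) * (v - u)" using uv(2) by (simp add: mult_left_mono mult.commute)
    moreover have "0 \<le> 20 * s * II (\<lambda>x. \<bar>f x - c\<bar>) u v"
      using spos by (intro mult_nonneg_nonneg II_nonneg) (auto intro!: loc_abs loc_diff locf loc_const)
    ultimately show "Ld f 0 c u v \<le> (4 * s^2) * (v - u) + 20 * s * II (\<lambda>x. \<bar>f x - c\<bar>) u v" by simp
  qed
next
  case (Suc h)
  have IH: "\<forall>u v. a \<le> u \<longrightarrow> u < v \<longrightarrow> v \<le> b \<longrightarrow> II (\<lambda>x. \<bar>f x - c\<bar>) u v \<le> 2 * s * (v - u) \<longrightarrow>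
     Ld f h c u v \<le> (4 * s^2) * (v - u) + 20 * s * II (\<lambda>x. \<bar>f x - c\<bar>) u v"
  proof -
    have "\<forall>h'<h. PP h'" using Suc.prems by simp
    then show ?thesis by (rule Suc.IH)
  qed
  have Ph: "PP h" using Suc.prems by simp
  let ?g = "\<lambda>x. \<bar>f x - c\<bar>"
  have locg: "loc ?g" by (intro loc_abs loc_diff locf loc_const)
  show ?case
  proof (intro allI impI)
    fix u v assume uv: "a \<le> u" "u < v" "v \<le> b" and G: "II ?g u v \<le> 2 * s * (v - u)"
    define m where "m = (u+v)/2"
    have um: "u < m" "m < v" using uv by (auto simp: m_def)
    have hm: "II ?g u m \<le> II ?g u v" "II ?g m v \<le> II ?g u v"
      using II_half[OF locg _ less_imp_le[OF uv(2)]] by (auto simp: m_def)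
    have half: "m - u = (v - u)/2" "v - m = (v - u)/2" by (auto simp: m_def field_simps)
    have child: "Ld f h c p q \<le> (4 * s^2) * (q - p) + 20 * s * II ?g p q"
      if pq: "a \<le> p" "p < q" "q \<le> b" "q - p = (v - u)/2" "II ?g p q \<le> II ?g u v" for p q
    proof (cases "II ?g p q \<le> 2 * s * (q - p)")
      case True
      then show ?thesis using IH[rule_format, OF pq(1) pq(2) pq(3)] by blast
    next
      case False
      have sh: "Ld f h c p q = Ld f h (av f p q) p q + (q - p) * (av f p q - c)^2"
        by (rule Ld_shift[OF locf pq(2)])
      have B: "Ld f h (av f p q) p q \<le> 24 * s^2 * (q - p)" using Ph[unfolded PP_def, rule_format, OF pq(1) pq(2) pq(3)] .
      have "\<bar>av f p q - c\<bar> * (q - p) \<le> II ?g p q" by (rule av_dev[OF locf pq(2)])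
      also have "\<dots> \<le> 2 * s * (v - u)" using pq(5) G by linarith
      also have "\<dots> = 4 * s * (q - p)" using pq(4) by simp
      finally have "\<bar>av f p q - c\<bar> \<le> 4 * s" using pq(2) by simp
      then have "(av f p q - c)^2 \<le> (4 * s)^2" by (rule sq_le)
      then have sq: "(av f p q - c)^2 \<le> 16 * s^2" by (simp add: power_mult_distrib)
      have "Ld f h c p q \<le> 24 * s^2 * (q - p) + (q - p) * (16 * s^2)"
        using sh B mult_left_mono[OF sq, of "q - p"] pq(2) by linarith
      also have "\<dots> = 20 * s * (2 * s * (q - p))" by (simp add: power2_eq_square algebra_simps)
      also have "\<dots> \<le> 20 * s * II ?g p q" using False spos by (intro mult_left_mono) auto
      also have "\<dots> \<le> (4 * s^2) * (q - p) + 20 * s * II ?g p q" using pq(2) by simp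
      finally show ?thesis .
    qed
    have c1: "Ld f h c u m \<le> (4 * s^2) * (m - u) + 20 * s * II ?g u m"
      by (rule child) (use uv um half hm in auto)
    have c2: "Ld f h c m v \<le> (4 * s^2) * (v - m) + 20 * s * II ?g m v"
      by (rule child) (use uv um half hm in auto)
    have sp: "II ?g u v = II ?g u m + II ?g m v" by (rule II_split[OF locg]) (use um in auto)
    have "Ld f (Suc h) c u v = Ld f h c u m + Ld f h c m v" by (simp add: m_def)
    also have "\<dots> \<le> (4 * s^2) * (m - u) + 20 * s * II ?g u m + ((4 * s^2) * (v - m) + 20 * s * II ?g m v)"
      using c1 c2 by linarith
    also have "\<dots> = (4 * s^2) * (v - u) + 20 * s * II ?g u v" by (simp add: sp algebra_simps)
    finally show "Ld f (Suc h) c u v \<le> (4 * s^2) * (v - u) + 20 * s * II ?g u v" .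
  qed
qed

lemma PP_all: "PP h"
proof (induction h rule: less_induct)
  case (less h)
  show ?case unfolding PP_def
  proof (intro allI impI)
    fix u v assume uv: "a \<le> u" "u < v" "v \<le> b"
    have G: "II (\<lambda>x. \<bar>f x - av f u v\<bar>) u v \<le> s * (v - u)" by (rule osc[OF uv])
    have "0 \<le> s * (v - u)" using spos uv by simp
    then have G2: "II (\<lambda>x. \<bar>f x - av f u v\<bar>) u v \<le> 2 * s * (v - u)" using G by linarith
    have "Ld f h (av f u v) u v \<le> (4 * s^2) * (v - u) + 20 * s * II (\<lambda>x. \<bar>f x - av f u v\<bar>) u v"
    proof -
      have "\<forall>h'<h. PP h'" using less by blast
      from claim[OF this, rule_format, OF uv G2] show ?thesis .
    qed
    also have "\<dots> \<le> (4 * s^2) * (v - u) + 20 * s * (s * (v - u))"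
      using G spos by (intro add_left_mono mult_left_mono) auto
    also have "\<dots> = 24 * s^2 * (v - u)" by (simp add: power2_eq_square algebra_simps)
    finally show "Ld f h (av f u v) u v \<le> 24 * s^2 * (v - u)" .
  qed
qed

end




fun Rd :: "(real \<Rightarrow> real) \<Rightarrow> nat \<Rightarrow> real \<Rightarrow> real \<Rightarrow> real" where
  "Rd f 0 u v = II (\<lambda>x. (f x - av f u v)^2) u v"
| "Rd f (Suc h) u v = Rd f h u ((u+v)/2) + Rd f h ((u+v)/2) v"

definition bdd :: "(real \<Rightarrow> real) \<Rightarrow> real \<Rightarrow> bool" where
  "bdd f N \<longleftrightarrow> f \<in> borel_measurable borel \<and> (\<forall>x. \<bar>f x\<bar> \<le> N)"

lemma bdd_loc: "bdd f N \<Longrightarrow> loc f"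
  unfolding bdd_def using loc_bounded by blast

lemma loc_sq: assumes "bdd f N" shows "loc (\<lambda>x. (f x - c)^2)"
proof (rule loc_bounded[where B="(N + \<bar>c\<bar>)^2"])
  have [measurable]: "f \<in> borel_measurable borel" using assms by (simp add: bdd_def)
  show "(\<lambda>x. (f x - c)^2) \<in> borel_measurable borel" by measurable
  fix x
  have "\<bar>f x - c\<bar> \<le> N + \<bar>c\<bar>" using assms unfolding bdd_def
    by (metis abs_triangle_ineq4 add_mono order_refl order_trans)
  then have "(f x - c)^2 \<le> (N + \<bar>c\<bar>)^2" by (rule sq_le)
  then show "\<bar>(f x - c)^2\<bar> \<le> (N + \<bar>c\<bar>)^2" by simp
qed

lemma pyth: assumes "bdd f N" "u < v"
  shows "II (\<lambda>x. (f x - c)^2) u v = II (\<lambda>x. (f x - av f u v)^2) u v + (v - u) * (av f u v - c)^2"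
proof -
  let ?a = "av f u v"
  have lf: "loc f" using bdd_loc[OF assms(1)] .
  have eq: "(\<lambda>x. (f x - c)^2) = (\<lambda>x. (f x - ?a)^2 + ((2 * (?a - c)) * (f x - ?a) + (?a - c)^2))"
    by (rule ext) (simp add: power2_eq_square algebra_simps)
  have z: "II (\<lambda>x. f x - ?a) u v = 0"
  proof -
    have "II (\<lambda>x. f x - ?a) u v = II f u v - ?a * (v - u)"
      using II_diff[OF lf loc_const, of ?a u v] II_const[of u v ?a] assms(2) by simp
    also have "?a * (v - u) = II f u v" unfolding av_def using assms(2) by simp
    finally show ?thesis by simp
  qed
  have h1: "II (\<lambda>x. (f x - c)^2) u v = II (\<lambda>x. (f x - ?a)^2) u v + II (\<lambda>x. (2 * (?a - c)) * (f x - ?a) + (?a - c)^2) u v"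
    unfolding eq by (rule II_add) (rule loc_sq[OF assms(1)], rule loc_add, rule loc_cmult, rule loc_diff, rule lf, rule loc_const, rule loc_const)
  have h2: "II (\<lambda>x. (2 * (?a - c)) * (f x - ?a) + (?a - c)^2) u v = II (\<lambda>x. (2 * (?a - c)) * (f x - ?a)) u v + II (\<lambda>x. (?a - c)^2) u v"
    by (rule II_add) (rule loc_cmult, rule loc_diff, rule lf, rule loc_const, rule loc_const)
  have h3: "II (\<lambda>x. (2 * (?a - c)) * (f x - ?a)) u v = 0"
    using II_cmult[of "2 * (?a - c)" "\<lambda>x. f x - ?a" u v] z by simp
  have h4: "II (\<lambda>x. (?a - c)^2) u v = (?a - c)^2 * (v - u)"
    using II_const[of u v "(?a - c)^2"] assms(2) by simp
  show ?thesis using h1 h2 h3 h4 by (simp add: mult.commute)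
qed

lemma decomp: assumes "bdd f N" "u < v"
  shows "II (\<lambda>x. (f x - c)^2) u v = Ld f h c u v + Rd f h u v"
  using assms(2)
proof (induction h arbitrary: u v)
  case 0
  then show ?case using pyth[OF assms(1) 0, of c] by simp
next
  case (Suc h)
  define m where "m = (u+v)/2"
  have um: "u < m" "m < v" using Suc.prems by (auto simp: m_def)
  have "II (\<lambda>x. (f x - c)^2) u v = II (\<lambda>x. (f x - c)^2) u m + II (\<lambda>x. (f x - c)^2) m v"
    by (rule II_split[OF loc_sq[OF assms(1)]]) (use um in auto)
  also have "\<dots> = (Ld f h c u m + Rd f h u m) + (Ld f h c m v + Rd f h m v)"
    using Suc.IH[OF um(1)] Suc.IH[OF um(2)] by simp
  finally show ?case by (simp add: m_def)
qed

lemma JN_bdd: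
  assumes "bmo_int f a b s" "bdd f N" "a < b"
    and R: "\<And>e. e > 0 \<Longrightarrow> \<exists>h. Rd f h a b < e"
  shows "II (\<lambda>x. (f x - av f a b)^2) a b \<le> 24 * s^2 * (b - a)"
proof (rule field_le_epsilon)
  fix e :: real assume e: "e > 0"
  obtain h where h: "Rd f h a b < e" using R[OF e] by blast
  have "II (\<lambda>x. (f x - av f a b)^2) a b = Ld f h (av f a b) a b + Rd f h a b"
    by (rule decomp[OF assms(2,3)])
  moreover have "Ld f h (av f a b) a b \<le> 24 * s^2 * (b - a)"
    using bmo_int.PP_all[OF assms(1), of h] assms(3) unfolding bmo_int.PP_def[OF assms(1)] by auto
  ultimately show "II (\<lambda>x. (f x - av f a b)^2) a b \<le> 24 * s^2 * (b - a) + e" using h by linarith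
qed




fun Ed :: "(real \<Rightarrow> real) \<Rightarrow> nat \<Rightarrow> real \<Rightarrow> real \<Rightarrow> real" where
  "Ed f 0 u v = II (\<lambda>x. \<bar>f x - av f u v\<bar>) u v"
| "Ed f (Suc h) u v = Ed f h u ((u+v)/2) + Ed f h ((u+v)/2) v"

lemma mid: "u < (v::real) \<Longrightarrow> u < (u+v)/2" "u < v \<Longrightarrow> (u+v)/2 < v" by auto

lemma av_add: "loc f \<Longrightarrow> loc g \<Longrightarrow> av (\<lambda>x. f x + g x) u v = av f u v + av g u v"
  unfolding av_def by (simp add: II_add add_divide_distrib)

lemma av_cmult: "av (\<lambda>x. c * f x) u v = c * av f u v"
  unfolding av_def by (simp add: II_cmult)

lemma av_bound: assumes "loc f" "u < v" "\<And>x. u \<le> x \<Longrightarrow> x \<le> v \<Longrightarrow> f x \<le> M"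
  shows "av f u v \<le> M"
proof -
  have "II f u v \<le> II (\<lambda>x. M) u v" by (rule II_mono) (use assms in \<open>auto intro: loc_const\<close>)
  then have "II f u v \<le> M * (v - u)" using II_const[of u v M] assms(2) by simp
  then show ?thesis unfolding av_def using assms(2) by (simp add: divide_le_eq)
qed

lemma av_bound2: assumes "loc f" "u < v" "\<And>x. u \<le> x \<Longrightarrow> x \<le> v \<Longrightarrow> M \<le> f x"
  shows "M \<le> av f u v"
proof -
  have "II (\<lambda>x. M) u v \<le> II f u v" by (rule II_mono) (use assms in \<open>auto intro: loc_const\<close>)
  then have "M * (v - u) \<le> II f u v" using II_const[of u v M] assms(2) by simp
  then show ?thesis unfolding av_def using assms(2) by (simp add: le_divide_eq)
qed

lemma Ed_nonneg: "u \<le> v \<Longrightarrow> loc f \<Longrightarrow> 0 \<le> Ed f h u v"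
proof (induction h arbitrary: u v)
  case 0
  then show ?case by (simp, intro II_nonneg) (auto intro!: loc_abs loc_diff loc_const)
next
  case (Suc h)
  have "u \<le> (u+v)/2" "(u+v)/2 \<le> v" using Suc.prems by simp_all
  then show ?case using Suc.IH[of u "(u+v)/2"] Suc.IH[of "(u+v)/2" v] Suc.prems by simp
qed

lemma Ed_add: assumes "loc f" "loc g"
  shows "u < v \<Longrightarrow> Ed (\<lambda>x. f x + g x) h u v \<le> Ed f h u v + Ed g h u v"
proof (induction h arbitrary: u v)
  case 0
  have "II (\<lambda>x. \<bar>f x + g x - (av f u v + av g u v)\<bar>) u v \<le> II (\<lambda>x. \<bar>f x - av f u v\<bar> + \<bar>g x - av g u v\<bar>) u v"
    by (rule II_mono) (auto intro!: loc_abs loc_diff loc_add loc_const assms)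
  also have "\<dots> = II (\<lambda>x. \<bar>f x - av f u v\<bar>) u v + II (\<lambda>x. \<bar>g x - av g u v\<bar>) u v"
    by (rule II_add) (auto intro!: loc_abs loc_diff loc_const assms)
  finally show ?case by (simp add: av_add[OF assms])
next
  case (Suc h)
  show ?case unfolding Ed.simps using Suc.IH[OF mid(1)[OF Suc.prems]] Suc.IH[OF mid(2)[OF Suc.prems]] by linarith
qed

lemma Ed_cmult: assumes "loc f"
  shows "Ed (\<lambda>x. c * f x) h u v = \<bar>c\<bar> * Ed f h u v"
proof (induction h arbitrary: u v)
  case 0
  have "(\<lambda>x. \<bar>c * f x - c * av f u v\<bar>) = (\<lambda>x. \<bar>c\<bar> * \<bar>f x - av f u v\<bar>)"
    by (rule ext) (simp add: abs_mult[symmetric] right_diff_distrib)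
  then show ?case by (simp add: av_cmult II_cmult)
next
  case (Suc h)
  then show ?case by (simp add: distrib_left)
qed

lemma Ed_const: "u < v \<Longrightarrow> Ed (\<lambda>x. c) h u v = 0"
proof (induction h arbitrary: u v)
  case 0
  then show ?case using II_const[of u v 0] by (simp add: av_const)
next
  case (Suc h)
  then show ?case using Suc.IH[OF mid(1)[OF Suc.prems]] Suc.IH[OF mid(2)[OF Suc.prems]] by simp
qed

lemma Ed_approx: assumes "loc f" "loc g"
  shows "u < v \<Longrightarrow> Ed f h u v \<le> Ed g h u v + 2 * II (\<lambda>x. \<bar>f x - g x\<bar>) u v"
proof (induction h arbitrary: u v)
  case 0
  have lfg: "loc (\<lambda>x. f x - g x)" by (intro loc_diff assms)
  have d: "\<bar>av f u v - av g u v\<bar> * (v - u) \<le> II (\<lambda>x. \<bar>f x - g x\<bar>) u v"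
  proof -
    have "av f u v - av g u v = av (\<lambda>x. f x - g x) u v"
      using av_add[OF assms(1) loc_cmult[OF assms(2), of "-1"], of u v] av_cmult[of "-1" g u v] by simp
    moreover have "\<bar>av (\<lambda>x. f x - g x) u v - 0\<bar> * (v - u) \<le> II (\<lambda>x. \<bar>f x - g x - 0\<bar>) u v"
      by (rule av_dev[OF lfg 0])
    ultimately show ?thesis by simp
  qed
  have "II (\<lambda>x. \<bar>f x - av f u v\<bar>) u v \<le> II (\<lambda>x. \<bar>g x - av g u v\<bar> + (\<bar>f x - g x\<bar> + \<bar>av f u v - av g u v\<bar>)) u v"
    by (rule II_mono) (auto intro!: loc_abs loc_diff loc_add loc_const assms)
  also have "\<dots> = II (\<lambda>x. \<bar>g x - av g u v\<bar>) u v + (II (\<lambda>x. \<bar>f x - g x\<bar>) u v + \<bar>av f u v - av g u v\<bar> * (v - u))"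
    using II_add[of "\<lambda>x. \<bar>g x - av g u v\<bar>" "\<lambda>x. \<bar>f x - g x\<bar> + \<bar>av f u v - av g u v\<bar>" u v]
      II_add[of "\<lambda>x. \<bar>f x - g x\<bar>" "\<lambda>x. \<bar>av f u v - av g u v\<bar>" u v] II_const[of u v "\<bar>av f u v - av g u v\<bar>"] 0
    by (simp add: loc_abs loc_diff loc_add loc_const assms)
  finally show ?case using d by simp
next
  case (Suc h)
  have "II (\<lambda>x. \<bar>f x - g x\<bar>) u v = II (\<lambda>x. \<bar>f x - g x\<bar>) u ((u+v)/2) + II (\<lambda>x. \<bar>f x - g x\<bar>) ((u+v)/2) v"
    by (rule II_split) (use Suc.prems in \<open>auto intro!: loc_abs loc_diff assms\<close>)
  then show ?case unfolding Ed.simps using Suc.IH[OF mid(1)[OF Suc.prems]] Suc.IH[OF mid(2)[OF Suc.prems]] by linarith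
qed

lemma Ed_mono_fn: assumes "\<phi> \<in> borel_measurable borel" "\<And>x y. x \<le> y \<Longrightarrow> \<phi> y \<le> \<phi> x" "\<And>x. \<bar>\<phi> x\<bar> \<le> 1"
  shows "u < v \<Longrightarrow> Ed \<phi> h u v \<le> (v - u) / 2^h * (\<phi> u - \<phi> v)"
proof (induction h arbitrary: u v)
  case 0
  have l: "loc \<phi>" by (rule loc_bounded[OF assms(1) assms(3)])
  have a1: "av \<phi> u v \<le> \<phi> u" by (rule av_bound[OF l 0]) (use assms(2) in auto)
  have a2: "\<phi> v \<le> av \<phi> u v" by (rule av_bound2[OF l 0]) (use assms(2) in auto)
  have "II (\<lambda>x. \<bar>\<phi> x - av \<phi> u v\<bar>) u v \<le> II (\<lambda>x. \<phi> u - \<phi> v) u v"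
  proof (rule II_mono)
    fix x assume "u \<le> x" "x \<le> v"
    then have "\<phi> v \<le> \<phi> x" "\<phi> x \<le> \<phi> u" using assms(2) by auto
    then show "\<bar>\<phi> x - av \<phi> u v\<bar> \<le> \<phi> u - \<phi> v" using a1 a2 by linarith
  qed (auto intro!: loc_abs loc_diff l loc_const)
  then show ?case using II_const[of u v "\<phi> u - \<phi> v"] 0 by (simp add: mult.commute)
next
  case (Suc h)
  have "Ed \<phi> (Suc h) u v \<le> ((u+v)/2 - u) / 2^h * (\<phi> u - \<phi> ((u+v)/2)) + (v - (u+v)/2) / 2^h * (\<phi> ((u+v)/2) - \<phi> v)"
    using Suc.IH[OF mid(1)[OF Suc.prems]] Suc.IH[OF mid(2)[OF Suc.prems]] by simp
  also have "\<dots> = (v - u) / 2^Suc h * (\<phi> u - \<phi> v)" by (simp add: field_simps)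
  finally show ?case .
qed




definition good :: "(real \<Rightarrow> real) \<Rightarrow> real \<Rightarrow> real \<Rightarrow> bool" where
  "good f u v \<longleftrightarrow> (\<forall>e>0. \<exists>H. \<forall>h\<ge>H. Ed f h u v < e)"

lemma II_lim0:
  assumes m: "\<And>i. g i \<in> borel_measurable borel" and lim: "\<And>x. (\<lambda>i. g i x) \<longlonglongrightarrow> 0"
    and bnd: "\<And>i x. \<bar>g i x\<bar> \<le> W x" and W: "loc W"
  shows "(\<lambda>i. II (g i) u v) \<longlonglongrightarrow> 0"
proof -
  have WW: "integrable lborel (\<lambda>x. indicator {u..v} x *\<^sub>R W x)"
    using W unfolding loc_def set_integrable_def by blast
  have f1: "(\<lambda>x::real. 0::real) \<in> borel_measurable lborel" by simp
  have f2: "(\<lambda>x. indicator {u..v} x *\<^sub>R g i x) \<in> borel_measurable lborel" for i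
      using m[of i] by simp
  have f3: "AE x in lborel. (\<lambda>i. indicator {u..v} x *\<^sub>R g i x) \<longlonglongrightarrow> 0"
  proof (rule AE_I2)
    fix x
    have "(\<lambda>i. indicator {u..v} x *\<^sub>R g i x) \<longlonglongrightarrow> indicator {u..v} x *\<^sub>R (0::real)"
      by (intro tendsto_scaleR tendsto_const lim)
    then show "(\<lambda>i. indicator {u..v} x *\<^sub>R g i x) \<longlonglongrightarrow> 0" by simp
  qed
  have f4: "AE x in lborel. norm (indicator {u..v} x *\<^sub>R g i x) \<le> indicator {u..v} x *\<^sub>R W x" for i
    using bnd[of i] by (intro AE_I2) (auto simp: indicator_def)
  have "(\<lambda>i. integral\<^sup>L lborel (\<lambda>x. indicator {u..v} x *\<^sub>R g i x)) \<longlonglongrightarrow> integral\<^sup>L lborel (\<lambda>x::real. 0::real)"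
    by (rule Bochner_Integration.integral_dominated_convergence[OF f1 f2 WW f3 f4])
  then show ?thesis unfolding II_def set_lebesgue_integral_def by simp
qed

lemma good_add: assumes "loc f" "loc g" "good f u v" "good g u v" "u < v"
  shows "good (\<lambda>x. f x + g x) u v"
  unfolding good_def
proof (intro allI impI)
  fix e :: real assume e: "e > 0"
  obtain H1 where H1: "\<And>h. h \<ge> H1 \<Longrightarrow> Ed f h u v < e/2" using assms(3) e unfolding good_def by (meson half_gt_zero)
  obtain H2 where H2: "\<And>h. h \<ge> H2 \<Longrightarrow> Ed g h u v < e/2" using assms(4) e unfolding good_def by (meson half_gt_zero)
  show "\<exists>H. \<forall>h\<ge>H. Ed (\<lambda>x. f x + g x) h u v < e"
  proof (intro exI allI impI)
    fix h assume "h \<ge> max H1 H2"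
    then have "Ed f h u v < e/2" "Ed g h u v < e/2" using H1 H2 by auto
    then show "Ed (\<lambda>x. f x + g x) h u v < e" using Ed_add[OF assms(1,2) assms(5), of h] by linarith
  qed
qed

lemma good_cmult: assumes "loc f" "good f u v" shows "good (\<lambda>x. c * f x) u v"
  unfolding good_def
proof (intro allI impI)
  fix e :: real assume e: "e > 0"
  have e': "e / (\<bar>c\<bar> + 1) > 0" using e by simp
  obtain H where H: "\<And>h. h \<ge> H \<Longrightarrow> Ed f h u v < e / (\<bar>c\<bar> + 1)" using assms(2) e' unfolding good_def by meson
  show "\<exists>H. \<forall>h\<ge>H. Ed (\<lambda>x. c * f x) h u v < e"
  proof (intro exI allI impI)
    fix h assume h: "h \<ge> H"
    have "Ed (\<lambda>x. c * f x) h u v = \<bar>c\<bar> * Ed f h u v" by (rule Ed_cmult[OF assms(1)])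
    also have "\<dots> \<le> (\<bar>c\<bar> + 1) * Ed f h u v \<or> Ed f h u v < 0" by (auto simp: mult_right_mono)
    then have "\<bar>c\<bar> * Ed f h u v < e"
    proof
      assume a: "\<bar>c\<bar> * Ed f h u v \<le> (\<bar>c\<bar> + 1) * Ed f h u v"
      have "(\<bar>c\<bar> + 1) * Ed f h u v < (\<bar>c\<bar> + 1) * (e / (\<bar>c\<bar> + 1))"
        using H[OF h] by (intro mult_strict_left_mono) auto
      then show ?thesis using a by simp
    next
      assume "Ed f h u v < 0"
      then have "\<bar>c\<bar> * Ed f h u v \<le> 0" by (simp add: mult_nonneg_nonpos)
      then show ?thesis using e by linarith
    qed
    finally show "Ed (\<lambda>x. c * f x) h u v < e"
      using \<open>\<bar>c\<bar> * Ed f h u v < e\<close> \<open>Ed (\<lambda>x. c * f x) h u v = \<bar>c\<bar> * Ed f h u v\<close> by simp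
  qed
qed

lemma good_const: "u < v \<Longrightarrow> good (\<lambda>x. c) u v"
  unfolding good_def using Ed_const by auto

lemma good_approx: assumes "loc f" "u < v"
  and ap: "\<And>e. e > 0 \<Longrightarrow> \<exists>g. loc g \<and> good g u v \<and> II (\<lambda>x. \<bar>f x - g x\<bar>) u v < e"
  shows "good f u v"
  unfolding good_def
proof (intro allI impI)
  fix e :: real assume e: "e > 0"
  obtain g where g: "loc g" "good g u v" "II (\<lambda>x. \<bar>f x - g x\<bar>) u v < e/4" using ap[of "e/4"] e by auto
  obtain H where H: "\<And>h. h \<ge> H \<Longrightarrow> Ed g h u v < e/2" using g(2) e unfolding good_def by (meson half_gt_zero)
  show "\<exists>H. \<forall>h\<ge>H. Ed f h u v < e"
  proof (intro exI allI impI)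
    fix h assume "h \<ge> H"
    then show "Ed f h u v < e" using H Ed_approx[OF assms(1) g(1) assms(2), of h] g(3) by fastforce
  qed
qed

lemma pow2_small: assumes "e > 0" shows "\<exists>H. \<forall>h\<ge>H. (c::real) / 2^h < e"
proof -
  obtain H where H: "\<bar>c\<bar> / e < 2^H" using real_arch_pow[of 2 "\<bar>c\<bar> / e"] by auto
  show ?thesis
  proof (intro exI allI impI)
    fix h :: nat assume h: "h \<ge> H"
    have "(2::real)^H \<le> 2^h" using h by (simp add: power_increasing)
    then have B: "e * 2^H \<le> e * 2^h" using assms by simp
    have A: "\<bar>c\<bar> < e * 2^H" using H assms by (simp add: divide_less_eq mult.commute)
    from A B have "\<bar>c\<bar> < e * 2^h" by linarith
    then show "c / 2^h < e" by (simp add: divide_less_eq)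
  qed
qed

lemma good_mono: assumes "\<phi> \<in> borel_measurable borel" "\<And>x y. x \<le> y \<Longrightarrow> \<phi> y \<le> \<phi> x" "\<And>x. \<bar>\<phi> x\<bar> \<le> 1" "u < v"
  shows "good \<phi> u v"
  unfolding good_def
proof (intro allI impI)
  fix e :: real assume e: "e > 0"
  obtain H where H: "\<And>h. h \<ge> H \<Longrightarrow> (2 * (v - u)) / 2^h < e" using pow2_small[OF e] by blast
  show "\<exists>H. \<forall>h\<ge>H. Ed \<phi> h u v < e"
  proof (intro exI allI impI)
    fix h assume h: "h \<ge> H"
    have "Ed \<phi> h u v \<le> (v - u) / 2^h * (\<phi> u - \<phi> v)" by (rule Ed_mono_fn[OF assms(1-3) assms(4)])
    also have "\<dots> \<le> (v - u) / 2^h * 2"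
      using assms(3)[of u] assms(3)[of v] assms(4) by (intro mult_left_mono) (auto simp: abs_le_iff)
    also have "\<dots> = (2 * (v - u)) / 2^h" by simp
    also have "\<dots> < e" by (rule H[OF h])
    finally show "Ed \<phi> h u v < e" .
  qed
qed

lemma loc_indicator: "A \<in> sets borel \<Longrightarrow> loc (indicator A)"
  by (rule loc_bounded[where B=1]) (auto simp: indicator_def)

lemma good_indicator: assumes "A \<in> sets borel" "u < v" shows "good (indicator A) u v"
  using assms(1)
proof (induction rule: borel_set_induct)
  case empty
  then show ?case using good_const[OF assms(2), of 0] by (simp add: fun_eq_iff)
next
  case (interval p q)
  have eq: "(indicator {p..q} :: real \<Rightarrow> real) = (\<lambda>x. indicator {..q} x + (-1) * indicator {..<p} x)"
    using interval by (auto simp: indicator_def fun_eq_iff)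
  have g1: "good (indicator {..q}) u v"
    by (rule good_mono) (auto simp: indicator_def assms(2))
  have g2: "good (indicator {..<p}) u v"
    by (rule good_mono) (auto simp: indicator_def assms(2))
  show ?case unfolding eq
    by (intro good_add good_cmult g1 g2 loc_indicator loc_cmult assms(2)) auto
next
  case (compl A)
  have eq: "(indicator (-A) :: real \<Rightarrow> real) = (\<lambda>x. 1 + (-1) * indicator A x)"
    by (auto simp: indicator_def fun_eq_iff)
  show ?case unfolding eq
    by (intro good_add good_cmult good_const loc_indicator loc_cmult loc_const compl assms(2))
next
  case (union F)
  let ?S = "\<lambda>k x. (\<Sum>i<k. indicator (F i) x) :: real"
  have locS: "loc (?S k)" for k
  proof (rule loc_bounded[where B="real k"])
    show "?S k \<in> borel_measurable borel"
      by (intro borel_measurable_sum borel_measurable_indicator union(2))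
    fix x
    have "?S k x \<le> (\<Sum>i<k. 1)" by (rule sum_mono) (simp add: indicator_def)
    moreover have "0 \<le> ?S k x" by (rule sum_nonneg) simp
    ultimately show "\<bar>?S k x\<bar> \<le> real k" by simp
  qed
  have goodS: "good (?S k) u v" for k
  proof (induction k)
    case 0
    then show ?case using good_const[OF assms(2), of 0] by simp
  next
    case (Suc k)
    have "good (\<lambda>x. ?S k x + indicator (F k) x) u v"
      by (rule good_add[OF locS loc_indicator Suc union(3) assms(2)]) (rule union(2))
    then show ?case by simp
  qed
  have disj: "\<And>i j. i \<noteq> j \<Longrightarrow> F i \<inter> F j = {}" using union(1) unfolding disjoint_family_on_def by auto
  have conv: "(\<lambda>k. ?S k x) \<longlonglongrightarrow> indicator (\<Union>i. F i) x" for x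
    using indicator_sums[OF disj, where x=x] unfolding sums_def .
  have Ub: "(\<Union>i. F i) \<in> sets borel" using union(2) by auto
  show ?case
  proof (rule good_approx[OF loc_indicator[OF Ub] assms(2)])
    fix e :: real assume e: "e > 0"
    have "(\<lambda>k. II (\<lambda>x. \<bar>indicator (\<Union>i. F i) x - ?S k x\<bar>) u v) \<longlonglongrightarrow> 0"
    proof (rule II_lim0[where W="\<lambda>x. 1"])
      show "(\<lambda>x. \<bar>indicator (\<Union>i. F i) x - ?S k x\<bar>) \<in> borel_measurable borel" for k
        using Ub union(2) by (intro borel_measurable_abs borel_measurable_diff borel_measurable_sum) auto
      show "(\<lambda>k. \<bar>indicator (\<Union>i. F i) x - ?S k x\<bar>) \<longlonglongrightarrow> 0" for x
      proof -
        have "(\<lambda>k. indicator (\<Union>i. F i) x - ?S k x) \<longlonglongrightarrow> indicator (\<Union>i. F i) x - indicator (\<Union>i. F i) x"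
          by (intro tendsto_diff tendsto_const conv)
        then have "(\<lambda>k. indicator (\<Union>i. F i) x - ?S k x) \<longlonglongrightarrow> 0" by simp
        then show ?thesis using tendsto_rabs_zero by blast
      qed
      show "\<bar>\<bar>indicator (\<Union>i. F i) x - ?S k x\<bar>\<bar> \<le> 1" for k x
      proof -
        have "?S k x \<in> {0, 1}"
        proof (cases "\<exists>i<k. x \<in> F i")
          case True
          then obtain i where i: "i < k" "x \<in> F i" by blast
          have "?S k x = (\<Sum>j\<in>{i}. indicator (F j) x)"
            by (rule sum.mono_neutral_right) (use i disj in \<open>auto simp: indicator_def\<close>)
          then show ?thesis using i by simp
        next
          case False
          then have "?S k x = 0" by (intro sum.neutral) (auto simp: indicator_def)
          then show ?thesis by simp
        qed
        then show ?thesis by (auto simp: indicator_def)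
      qed
      show "loc (\<lambda>x. 1)" by (rule loc_const)
    qed
    then obtain k where "\<bar>II (\<lambda>x. \<bar>indicator (\<Union>i. F i) x - ?S k x\<bar>) u v - 0\<bar> < e"
      using e unfolding LIMSEQ_def dist_real_def by auto
    then have "II (\<lambda>x. \<bar>indicator (\<Union>i. F i) x - ?S k x\<bar>) u v < e" by simp
    then show "\<exists>g. loc g \<and> good g u v \<and> II (\<lambda>x. \<bar>indicator (\<Union>i. F i) x - g x\<bar>) u v < e"
      using locS[of k] goodS[of k] by blast
  qed
qed




lemma int_loc: "integrable lborel f \<Longrightarrow> loc f"
  unfolding loc_def set_integrable_def
  using integrable_mult_indicator[of _ lborel f] by simp

lemma good_integrable: assumes "integrable lborel g" "u < v" shows "good g u v"
  using assms(1)
proof (induction rule: integrable_induct)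
  case (base A c)
  have A: "A \<in> sets borel" using base by simp
  have "good (\<lambda>x. c * indicator A x) u v"
    by (rule good_cmult[OF loc_indicator[OF A] good_indicator[OF A assms(2)]])
  then show ?case by (simp add: mult.commute)
next
  case (add f g)
  have i1: "integrable lborel f" and g1: "good f u v" and i2: "integrable lborel g" and g2: "good g u v"
    using add by blast+
  show ?case using good_add[OF int_loc[OF i1] int_loc[OF i2] g1 g2 assms(2)] by simp
next
  case (lim f s)
  have L1: "integrable lborel (s i)" for i using lim by blast
  have L2: "good (s i) u v" for i using lim by blast
  have L3: "(\<lambda>i. s i x) \<longlonglongrightarrow> f x" for x using lim by simp
  have L4: "\<bar>s i x\<bar> \<le> 2 * \<bar>f x\<bar>" for i x using lim by simp
  have L5: "integrable lborel f" using lim by blast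
  have mf: "f \<in> borel_measurable borel" using borel_measurable_integrable[OF L5] by simp
  have ms: "s i \<in> borel_measurable borel" for i using borel_measurable_integrable[OF L1] by simp
  show ?case
  proof (rule good_approx[OF int_loc[OF L5] assms(2)])
    fix e :: real assume e: "e > 0"
    have "(\<lambda>i. II (\<lambda>x. \<bar>f x - s i x\<bar>) u v) \<longlonglongrightarrow> 0"
    proof (rule II_lim0[where W="\<lambda>x. 3 * \<bar>f x\<bar>"])
      show "(\<lambda>x. \<bar>f x - s i x\<bar>) \<in> borel_measurable borel" for i
        using mf ms[of i] by (intro borel_measurable_abs borel_measurable_diff) auto
      show "(\<lambda>i. \<bar>f x - s i x\<bar>) \<longlonglongrightarrow> 0" for x
      proof -
        have "(\<lambda>i. f x - s i x) \<longlonglongrightarrow> f x - f x" by (intro tendsto_diff tendsto_const L3)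
        then have "(\<lambda>i. f x - s i x) \<longlonglongrightarrow> 0" by simp
        then show ?thesis using tendsto_rabs_zero by blast
      qed
      show "\<bar>\<bar>f x - s i x\<bar>\<bar> \<le> 3 * \<bar>f x\<bar>" for i x
        using L4[of i x] by simp
      show "loc (\<lambda>x. 3 * \<bar>f x\<bar>)" by (intro loc_cmult loc_abs int_loc L5)
    qed
    then obtain i where "\<bar>II (\<lambda>x. \<bar>f x - s i x\<bar>) u v - 0\<bar> < e"
      using e unfolding LIMSEQ_def dist_real_def by auto
    then have "II (\<lambda>x. \<bar>f x - s i x\<bar>) u v < e" by simp
    then show "\<exists>g. loc g \<and> good g u v \<and> II (\<lambda>x. \<bar>f x - g x\<bar>) u v < e"
      using int_loc[OF L1[of i]] L2[of i] by blast
  qed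
qed

lemma II_cong: "(\<And>x. u \<le> x \<Longrightarrow> x \<le> v \<Longrightarrow> f x = g x) \<Longrightarrow> II f u v = II g u v"
  unfolding II_def by (rule set_lebesgue_integral_cong) auto

lemma Ed_cong: assumes "\<And>x. u \<le> x \<Longrightarrow> x \<le> v \<Longrightarrow> f x = g x"
  shows "Ed f h u v = Ed g h u v"
  using assms
proof (induction h arbitrary: u v)
  case 0
  have a: "av f u v = av g u v" unfolding av_def using II_cong[of u v f g] 0 by simp
  show ?case unfolding Ed.simps a by (rule II_cong) (use 0 in auto)
next
  case (Suc h)
  have "Ed f h u ((u+v)/2) = Ed g h u ((u+v)/2)" by (rule Suc.IH) (use Suc.prems in auto)
  moreover have "Ed f h ((u+v)/2) v = Ed g h ((u+v)/2) v" by (rule Suc.IH) (use Suc.prems in auto)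
  ultimately show ?case by simp
qed

lemma Rd_le: assumes "bdd f N"
  shows "u < v \<Longrightarrow> Rd f h u v \<le> 2 * N * Ed f h u v"
proof (induction h arbitrary: u v)
  case 0
  have lf: "loc f" using bdd_loc[OF assms] .
  have fb: "\<bar>f x\<bar> \<le> N" for x using assms unfolding bdd_def by auto
  have a1: "av f u v \<le> N" by (rule av_bound[OF lf 0]) (use fb in \<open>auto simp: abs_le_iff\<close>)
  have a2: "- N \<le> av f u v"
  proof (rule av_bound2[OF lf 0])
    fix x show "- N \<le> f x" using fb[of x] by (simp add: abs_le_iff)
  qed
  have "II (\<lambda>x. (f x - av f u v)^2) u v \<le> II (\<lambda>x. (2 * N) * \<bar>f x - av f u v\<bar>) u v"
  proof (rule II_mono)
    fix x
    have d: "\<bar>f x - av f u v\<bar> \<le> 2 * N" using fb[of x] a1 a2 by (simp add: abs_le_iff)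
    have "(f x - av f u v)^2 = \<bar>f x - av f u v\<bar> * \<bar>f x - av f u v\<bar>" by (simp add: power2_eq_square abs_mult_self_eq)
    also have "\<dots> \<le> (2 * N) * \<bar>f x - av f u v\<bar>" by (rule mult_right_mono[OF d]) simp
    finally show "(f x - av f u v)^2 \<le> (2 * N) * \<bar>f x - av f u v\<bar>" .
  qed (auto intro!: loc_sq[OF assms] loc_cmult loc_abs loc_diff lf loc_const)
  then show ?case by (simp add: II_cmult)
next
  case (Suc h)
  show ?case unfolding Rd.simps Ed.simps
    using Suc.IH[OF mid(1)[OF Suc.prems]] Suc.IH[OF mid(2)[OF Suc.prems]] by (simp add: distrib_left)
qed

lemma Rd_small: assumes "bdd f N" "a < b" "e > 0" shows "\<exists>h. Rd f h a b < e"
proof -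
  have N: "0 \<le> N" using assms(1) unfolding bdd_def by (meson abs_ge_zero order_trans)
  let ?g = "\<lambda>x. indicator {a..b} x * f x"
  have "integrable lborel ?g"
    using bdd_loc[OF assms(1)] unfolding loc_def set_integrable_def by simp
  then have "good ?g a b" by (rule good_integrable[OF _ assms(2)])
  moreover have "Ed ?g h a b = Ed f h a b" for h by (rule Ed_cong) auto
  ultimately have gf: "good f a b" unfolding good_def by simp
  have e': "e / (2 * N + 1) > 0" using N assms(3) by simp
  obtain H where H: "\<And>h. h \<ge> H \<Longrightarrow> Ed f h a b < e / (2 * N + 1)" using gf e' unfolding good_def by meson
  have E0: "0 \<le> Ed f H a b" using Ed_nonneg[of a b f H] assms(2) bdd_loc[OF assms(1)] by simp
  have "Rd f H a b \<le> 2 * N * Ed f H a b" by (rule Rd_le[OF assms(1,2)])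
  also have "\<dots> \<le> (2 * N + 1) * Ed f H a b" using E0 by (simp add: mult_right_mono)
  also have "\<dots> < (2 * N + 1) * (e / (2 * N + 1))" using H[of H] N by (intro mult_strict_left_mono) auto
  also have "\<dots> = e" using N by simp
  finally show ?thesis by blast
qed

lemma JN_final: assumes "bmo_int f a b s" "bdd f N" "a < b"
  shows "II (\<lambda>x. (f x - av f a b)^2) a b \<le> 24 * s^2 * (b - a)"
  by (rule JN_bdd[OF assms]) (rule Rd_small[OF assms(2,3)])




lemma lbint_II: "u \<le> v \<Longrightarrow> (LBINT x=u..v. g x) = II g u v"
  unfolding II_def by (rule interval_integral_Icc)

lemma bmo_ext: assumes "bmo_norm g = ereal t"
  shows "loc g" and "\<And>u v. u < v \<Longrightarrow> v \<le> u + 2 * pi \<Longrightarrow> II (\<lambda>x. \<bar>g x - av g u v\<bar>) u v \<le> t * (v - u)"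
    and "0 \<le> t"
proof -
  have c: "\<forall>a b. set_integrable lborel {a..b} g"
  proof (rule ccontr)
    assume "\<not> ?thesis"
    then have "bmo_norm g = \<infinity>" unfolding bmo_norm_def by (rule if_not_P)
    then show False using assms by simp
  qed
  then show lg: "loc g" unfolding loc_def .
  have S: "bmo_norm g \<le> ereal t" using assms by simp
  note S2 = S[unfolded bmo_norm_def if_P[OF c] SUP_le_iff]
  have el: "(II (\<lambda>x. \<bar>g x - av g u v\<bar>) u v) / (v - u) \<le> t" if uv: "u < v" "v \<le> u + 2 * pi" for u v
  proof -
    have "(u, v) \<in> {(a, b). a < b \<and> b \<le> a + 2 * pi}" using uv by auto
    from S2[rule_format, OF this] have "(LBINT x=u..v. \<bar>g x - arc_avg g u v\<bar>) / (v - u) \<le> t" by simp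
    moreover have "arc_avg g u v = av g u v" unfolding arc_avg_def av_def using lbint_II[of u v g] uv by simp
    ultimately show ?thesis using lbint_II[of u v "\<lambda>x. \<bar>g x - av g u v\<bar>"] uv by simp
  qed
  show "II (\<lambda>x. \<bar>g x - av g u v\<bar>) u v \<le> t * (v - u)" if "u < v" "v \<le> u + 2 * pi" for u v
    using el[OF that] that by (simp add: divide_le_eq)
  have "0 \<le> II (\<lambda>x. \<bar>g x - av g 0 1\<bar>) 0 1"
    by (rule II_nonneg) (auto intro!: loc_abs loc_diff lg loc_const)
  then show "0 \<le> t" using el[of 0 1] pi_gt3 by simp
qed

lemma trunc_osc: assumes "loc g" "loc (\<lambda>x. \<phi> (g x))" "\<And>x y. \<bar>\<phi> x - \<phi> y\<bar> \<le> \<bar>x - y\<bar>" "u < v"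
  shows "II (\<lambda>x. \<bar>\<phi> (g x) - av (\<lambda>x. \<phi> (g x)) u v\<bar>) u v \<le> 2 * II (\<lambda>x. \<bar>g x - av g u v\<bar>) u v"
proof -
  let ?p = "\<lambda>x. \<phi> (g x)"
  let ?c = "\<phi> (av g u v)"
  have l1: "loc (\<lambda>x. \<bar>?p x - ?c\<bar>)" by (intro loc_abs loc_diff assms(2) loc_const)
  have A: "II (\<lambda>x. \<bar>?p x - av ?p u v\<bar>) u v \<le> II (\<lambda>x. \<bar>?p x - ?c\<bar> + \<bar>av ?p u v - ?c\<bar>) u v"
    by (rule II_mono) (auto intro!: loc_abs loc_diff loc_add assms(2) loc_const)
  have B: "II (\<lambda>x. \<bar>?p x - ?c\<bar> + \<bar>av ?p u v - ?c\<bar>) u v = II (\<lambda>x. \<bar>?p x - ?c\<bar>) u v + \<bar>av ?p u v - ?c\<bar> * (v - u)"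
    using II_add[OF l1 loc_const, of "\<bar>av ?p u v - ?c\<bar>" u v] II_const[of u v "\<bar>av ?p u v - ?c\<bar>"] assms(4) by simp
  have C: "\<bar>av ?p u v - ?c\<bar> * (v - u) \<le> II (\<lambda>x. \<bar>?p x - ?c\<bar>) u v" by (rule av_dev[OF assms(2,4)])
  have D: "II (\<lambda>x. \<bar>?p x - ?c\<bar>) u v \<le> II (\<lambda>x. \<bar>g x - av g u v\<bar>) u v"
    by (rule II_mono) (auto intro!: l1 loc_abs loc_diff assms(1) loc_const assms(3))
  show ?thesis using A B C D by linarith
qed

lemma min_lip: "\<bar>min x N - min y N\<bar> \<le> \<bar>x - y\<bar>" for x y N :: real
  by (auto simp: min_def)

lemma II_lim_trunc: assumes "loc g" "\<And>x. 0 \<le> g x"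
  shows "(\<lambda>n. II (\<lambda>x. min (g x) (real n)) u v) \<longlonglongrightarrow> II g u v"
proof -
  have m: "g \<in> borel_measurable borel" by (rule loc_meas[OF assms(1)])
  have lt: "loc (\<lambda>x. min (g x) (real n))" for n
    by (rule loc_bounded[where B="real n"]) (use m assms(2) in auto)
  have "(\<lambda>n. II (\<lambda>x. g x - min (g x) (real n)) u v) \<longlonglongrightarrow> 0"
  proof (rule II_lim0[where W=g])
    show "(\<lambda>x. g x - min (g x) (real n)) \<in> borel_measurable borel" for n using m by measurable
    show "(\<lambda>n. g x - min (g x) (real n)) \<longlonglongrightarrow> 0" for x
    proof (rule tendsto_eventually)
      obtain n0 where "g x \<le> real n0" using real_arch_simple by blast
      then show "\<forall>\<^sub>F n in sequentially. g x - min (g x) (real n) = 0"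
        unfolding eventually_sequentially by (intro exI[of _ n0]) auto
    qed
    show "\<bar>g x - min (g x) (real n)\<bar> \<le> g x" for n x using assms(2)[of x] by (auto simp: min_def)
  qed (rule assms(1))
  moreover have "II (\<lambda>x. g x - min (g x) (real n)) u v = II g u v - II (\<lambda>x. min (g x) (real n)) u v" for n
    by (rule II_diff[OF assms(1) lt])
  ultimately have "(\<lambda>n. II g u v - II (\<lambda>x. min (g x) (real n)) u v) \<longlonglongrightarrow> 0" by simp
  then have "(\<lambda>n. II g u v - (II g u v - II (\<lambda>x. min (g x) (real n)) u v)) \<longlonglongrightarrow> II g u v - 0"
    by (intro tendsto_diff tendsto_const)
  then show ?thesis by simp
qed




lemma amgm: assumes "(lam::real) > 0" shows "p * q \<le> (lam * p^2 + q^2 / lam) / 2"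
proof -
  have "0 \<le> (lam * p - q)^2 / lam" using assms by simp
  also have "(lam * p - q)^2 / lam = lam * p^2 + q^2 / lam - 2 * (p * q)"
    using assms by (simp add: power2_eq_square field_simps)
  finally show ?thesis by simp
qed

lemma prod_bound:
  assumes bW: "bdd W N" and bF: "bdd F N" and WF: "\<And>x. W x * F x \<le> 1"
    and X: "II (\<lambda>x. (W x - av W l r)^2) l r \<le> 24 * T^2 * (r - l)"
    and Y: "II (\<lambda>x. (F x - av F l r)^2) l r \<le> 24 * S^2 * (r - l)"
    and T: "T > 0" and S: "S > 0" and lr: "l < r"
  shows "av W l r * av F l r \<le> 1 + 24 * T * S"
proof -
  let ?a = "av W l r" and ?b = "av F l r" and ?L = "r - l"
  have lW: "loc W" and lF: "loc F" using bW bF by (auto intro: bdd_loc)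
  have mW: "W \<in> borel_measurable borel" and mF: "F \<in> borel_measurable borel"
    using bW bF unfolding bdd_def by auto
  have lWF: "loc (\<lambda>x. W x * F x)"
  proof (rule loc_bounded[where B="N * N"])
    show "(\<lambda>x. W x * F x) \<in> borel_measurable borel" using mW mF by measurable
    fix x
    have "\<bar>W x\<bar> \<le> N" "\<bar>F x\<bar> \<le> N" using bW bF unfolding bdd_def by auto
    then show "\<bar>W x * F x\<bar> \<le> N * N" by (simp add: abs_mult mult_mono')
  qed
  have IW: "II W l r = ?a * ?L" and IF: "II F l r = ?b * ?L" unfolding av_def using lr by simp_all
  have eq: "(\<lambda>x. (W x - ?a) * (?b - F x)) = (\<lambda>x. (?b * W x + ?a * F x) - (W x * F x + ?a * ?b))"
    by (rule ext) (simp add: algebra_simps)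
  have I1: "II (\<lambda>x. (W x - ?a) * (?b - F x)) l r = ?a * ?b * ?L - II (\<lambda>x. W x * F x) l r"
  proof -
    have "II (\<lambda>x. (?b * W x + ?a * F x) - (W x * F x + ?a * ?b)) l r
        = II (\<lambda>x. ?b * W x + ?a * F x) l r - II (\<lambda>x. W x * F x + ?a * ?b) l r"
      by (rule II_diff) (intro loc_add loc_cmult lW lF lWF loc_const)+
    also have "II (\<lambda>x. ?b * W x + ?a * F x) l r = ?b * II W l r + ?a * II F l r"
      using II_add[OF loc_cmult[OF lW] loc_cmult[OF lF], of ?b ?a l r] by (simp add: II_cmult)
    also have "II (\<lambda>x. W x * F x + ?a * ?b) l r = II (\<lambda>x. W x * F x) l r + ?a * ?b * ?L"
      using II_add[OF lWF loc_const, of "?a * ?b" l r] II_const[of l r "?a * ?b"] lr by simp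
    finally show ?thesis unfolding eq IW IF by (simp add: algebra_simps)
  qed
  define lam where "lam = S / T"
  have lam: "lam > 0" using S T by (simp add: lam_def)
  have lsq1: "loc (\<lambda>x. (W x - ?a)^2)" by (rule loc_sq[OF bW])
  have lsq2: "loc (\<lambda>x. (F x - ?b)^2)" by (rule loc_sq[OF bF])
  have eqL: "(\<lambda>x. (lam * (W x - ?a)^2 + (?b - F x)^2 / lam) / 2) = (\<lambda>x. (lam / 2) * (W x - ?a)^2 + (1 / (2 * lam)) * (F x - ?b)^2)"
    by (rule ext) (simp add: power2_commute field_simps)
  have I2: "II (\<lambda>x. (W x - ?a) * (?b - F x)) l r \<le> II (\<lambda>x. (lam * (W x - ?a)^2 + (?b - F x)^2 / lam) / 2) l r"
  proof (rule II_mono)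
    show "loc (\<lambda>x. (W x - ?a) * (?b - F x))" unfolding eq
      by (intro loc_diff loc_add loc_cmult lW lF lWF loc_const)
    show "loc (\<lambda>x. (lam * (W x - ?a)^2 + (?b - F x)^2 / lam) / 2)"
      unfolding eqL by (rule loc_add[OF loc_cmult[OF lsq1] loc_cmult[OF lsq2]])
    show "(W x - ?a) * (?b - F x) \<le> (lam * (W x - ?a)^2 + (?b - F x)^2 / lam) / 2" for x
      by (rule amgm[OF lam])
  qed
  have I3: "II (\<lambda>x. (lam * (W x - ?a)^2 + (?b - F x)^2 / lam) / 2) l r
      = (lam / 2) * II (\<lambda>x. (W x - ?a)^2) l r + (1 / (2 * lam)) * II (\<lambda>x. (F x - ?b)^2) l r"
    unfolding eqL II_add[OF loc_cmult[OF lsq1] loc_cmult[OF lsq2], of "lam/2" "1/(2*lam)" l r] II_cmult ..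
  have I4: "(lam / 2) * II (\<lambda>x. (W x - ?a)^2) l r + (1 / (2 * lam)) * II (\<lambda>x. (F x - ?b)^2) l r
      \<le> (lam / 2) * (24 * T^2 * ?L) + (1 / (2 * lam)) * (24 * S^2 * ?L)"
    using X Y lam by (intro add_mono mult_left_mono) auto
  have I5: "(lam / 2) * (24 * T^2 * ?L) + (1 / (2 * lam)) * (24 * S^2 * ?L) = 24 * T * S * ?L"
    using S T unfolding lam_def by (simp add: power2_eq_square field_simps)
  have I6: "II (\<lambda>x. W x * F x) l r \<le> II (\<lambda>x. 1) l r" by (rule II_mono[OF lWF loc_const WF])
  have I7: "II (\<lambda>x. 1) l r = ?L" using II_const[of l r 1] lr by simp
  have "?a * ?b * ?L \<le> ?L + 24 * T * S * ?L"
    using I1 I2 I3 I4 I5 I6 I7 by linarith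
  then have "?a * ?b * ?L \<le> (1 + 24 * T * S) * ?L" by (simp add: algebra_simps)
  then show ?thesis using lr by simp
qed




lemma amgm2: assumes "(y::real) > 0" shows "2 - y \<le> 1 / y"
proof -
  have "0 \<le> (y - 1)^2" by simp
  then have "(2 - y) * y \<le> 1" by (simp add: power2_eq_square algebra_simps)
  then show ?thesis using assms by (simp add: pos_le_divide_eq)
qed

lemma upper_delta:
  fixes w :: "real \<Rightarrow> real"
  assumes w0: "\<And>x. w x \<ge> 0" and lw: "loc w" and lf: "loc (\<lambda>x. inverse (w x))"
    and oscw: "\<And>u v. u < v \<Longrightarrow> v \<le> u + 2 * pi \<Longrightarrow> II (\<lambda>x. \<bar>w x - av w u v\<bar>) u v \<le> t * (v - u)"
    and oscf: "\<And>u v. u < v \<Longrightarrow> v \<le> u + 2 * pi \<Longrightarrow> II (\<lambda>x. \<bar>inverse (w x) - av (\<lambda>x. inverse (w x)) u v\<bar>) u v \<le> s * (v - u)"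
    and t0: "0 \<le> t" and s0: "0 \<le> s" and Iw: "II w (-pi) pi = 1" and d: "dd > 0"
  shows "II (\<lambda>x. inverse (w x)) (-pi) pi \<le> (2*pi)^2 * (1 + 24 * (2 * t + dd) * (2 * s + dd))"
proof -
  let ?f = "\<lambda>x. inverse (w x)"
  define T where "T = 2 * t + dd"
  define S where "S = 2 * s + dd"
  have T: "T > 0" and S: "S > 0" using t0 s0 d by (auto simp: T_def S_def)
  have f0: "0 \<le> ?f x" for x using w0[of x] by simp
  have mw: "w \<in> borel_measurable borel" by (rule loc_meas[OF lw])
  have mf: "?f \<in> borel_measurable borel" by (rule loc_meas[OF lf])
  let ?W = "\<lambda>n x. min (w x) (real n)"
  let ?F = "\<lambda>n x. min (?f x) (real n)"
  have bW: "bdd (?W n) (real n)" for n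
    unfolding bdd_def using mw w0 by (auto simp: min_def)
  have bF: "bdd (?F n) (real n)" for n
    unfolding bdd_def using mf f0 by (auto simp: min_def)
  have lr: "-pi < pi" by simp
  have JNg: "II (\<lambda>x. (min (g x) (real n) - av (\<lambda>x. min (g x) (real n)) (-pi) pi)^2) (-pi) pi \<le> 24 * R^2 * (pi - (-pi))"
    if lg: "loc g" and bg: "bdd (\<lambda>x. min (g x) (real n)) (real n)" and R: "R > 0" and r0: "0 \<le> r" and rR: "2 * r \<le> R"
      and og: "\<And>u v. u < v \<Longrightarrow> v \<le> u + 2 * pi \<Longrightarrow> II (\<lambda>x. \<bar>g x - av g u v\<bar>) u v \<le> r * (v - u)" for g n R r
  proof -
    have "bmo_int (\<lambda>x. min (g x) (real n)) (-pi) pi R"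
    proof
      show "loc (\<lambda>x. min (g x) (real n))" by (rule bdd_loc[OF bg])
      show "R > 0" by (rule R)
      fix u v assume uv: "-pi \<le> u" "u < v" "v \<le> pi"
      have "II (\<lambda>x. \<bar>min (g x) (real n) - av (\<lambda>x. min (g x) (real n)) u v\<bar>) u v \<le> 2 * II (\<lambda>x. \<bar>g x - av g u v\<bar>) u v"
        by (rule trunc_osc[OF lg bdd_loc[OF bg] min_lip uv(2)])
      also have "\<dots> \<le> 2 * (r * (v - u))" using og[of u v] uv by simp
      also have "\<dots> \<le> R * (v - u)" using rR uv by (simp add: mult_right_mono)
      finally show "II (\<lambda>x. \<bar>min (g x) (real n) - av (\<lambda>x. min (g x) (real n)) u v\<bar>) u v \<le> R * (v - u)" .
    qed
    then show ?thesis by (rule JN_final[OF _ bg lr])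
  qed
  have WF: "?W n x * ?F n x \<le> 1" for n x
  proof (cases "w x = 0")
    case True
    then show ?thesis by simp
  next
    case False
    have "?W n x * ?F n x \<le> w x * ?f x"
      using w0[of x] f0[of x] by (intro mult_mono) auto
    also have "\<dots> = 1" using False by simp
    finally show ?thesis .
  qed
  have PB: "av (?W n) (-pi) pi * av (?F n) (-pi) pi \<le> 1 + 24 * T * S" for n
  proof (rule prod_bound[OF bW bF WF _ _ T S lr])
    show "II (\<lambda>x. (?W n x - av (?W n) (-pi) pi)^2) (-pi) pi \<le> 24 * T^2 * (pi - (-pi))"
      by (rule JNg[OF lw bW T t0 _ oscw]) (simp add: T_def d less_imp_le)
    show "II (\<lambda>x. (?F n x - av (?F n) (-pi) pi)^2) (-pi) pi \<le> 24 * S^2 * (pi - (-pi))"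
      by (rule JNg[OF lf bF S s0 _ oscf]) (simp add: S_def d less_imp_le)
  qed
  have cW: "(\<lambda>n. av (?W n) (-pi) pi) \<longlonglongrightarrow> II w (-pi) pi / (2*pi)"
  proof -
    have "(\<lambda>n. II (?W n) (-pi) pi / (2*pi)) \<longlonglongrightarrow> II w (-pi) pi / (2*pi)"
      by (intro tendsto_divide II_lim_trunc[OF lw w0] tendsto_const) simp
    then show ?thesis by (simp add: av_def)
  qed
  have cF: "(\<lambda>n. av (?F n) (-pi) pi) \<longlonglongrightarrow> II ?f (-pi) pi / (2*pi)"
  proof -
    have "(\<lambda>n. II (?F n) (-pi) pi / (2*pi)) \<longlonglongrightarrow> II ?f (-pi) pi / (2*pi)"
      by (intro tendsto_divide II_lim_trunc[OF lf f0] tendsto_const) simp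
    then show ?thesis by (simp add: av_def)
  qed
  have "(\<lambda>n. av (?W n) (-pi) pi * av (?F n) (-pi) pi) \<longlonglongrightarrow> (II w (-pi) pi / (2*pi)) * (II ?f (-pi) pi / (2*pi))"
    by (rule tendsto_mult[OF cW cF])
  then have "(II w (-pi) pi / (2*pi)) * (II ?f (-pi) pi / (2*pi)) \<le> 1 + 24 * T * S"
    by (rule LIMSEQ_le_const2) (use PB in auto)
  then have "II ?f (-pi) pi / (2*pi)^2 \<le> 1 + 24 * T * S" using Iw by (simp add: power2_eq_square)
  then show ?thesis by (simp add: T_def S_def divide_le_eq mult.commute)
qed

lemma main_bound:
  fixes w :: "real \<Rightarrow> real"
  assumes w0: "\<forall>x. w x \<ge> 0" and ae: "AE x in lborel. w x \<noteq> 0" and bt: "bmo_norm w = ereal t"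
    and bs: "bmo_norm (\<lambda>x. inverse (w x)) = ereal s" and L1: "L1_norm_T w = 1"
  shows "(2*pi)^2 \<le> L1_norm_T (\<lambda>x. inverse (w x)) \<and> L1_norm_T (\<lambda>x. inverse (w x)) \<le> 96 * (2*pi)^2 * (1 + (1 + t) * s)"
proof -
  let ?f = "\<lambda>x. inverse (w x)"
  have lw: "loc w" and t0: "0 \<le> t" using bmo_ext[OF bt] by auto
  have lf: "loc ?f" and s0: "0 \<le> s" using bmo_ext[OF bs] by auto
  have oscw: "\<And>u v. u < v \<Longrightarrow> v \<le> u + 2 * pi \<Longrightarrow> II (\<lambda>x. \<bar>w x - av w u v\<bar>) u v \<le> t * (v - u)"
    using bmo_ext(2)[OF bt] by blast
  have oscf: "\<And>u v. u < v \<Longrightarrow> v \<le> u + 2 * pi \<Longrightarrow> II (\<lambda>x. \<bar>?f x - av ?f u v\<bar>) u v \<le> s * (v - u)"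
    using bmo_ext(2)[OF bs] by blast
  have w0': "\<And>x. w x \<ge> 0" using w0 by auto
  have f0: "0 \<le> ?f x" for x using w0'[of x] by simp
  have Lw: "L1_norm_T w = II w (-pi) pi"
    unfolding L1_norm_T_def using lbint_II[of "-pi" pi "\<lambda>x. \<bar>w x\<bar>"] w0' by simp
  have Lf: "L1_norm_T ?f = II ?f (-pi) pi"
    unfolding L1_norm_T_def using lbint_II[of "-pi" pi "\<lambda>x. \<bar>?f x\<bar>"] f0 by simp
  have Iw: "II w (-pi) pi = 1" using L1 Lw by simp
  have low: "II (\<lambda>x. 2 - 2*pi * w x) (-pi) pi \<le> II (\<lambda>x. (1/(2*pi)) * ?f x) (-pi) pi"
    unfolding II_def
  proof (rule set_integral_mono_AE)
    show "set_integrable lborel {-pi..pi} (\<lambda>x. 2 - 2*pi * w x)"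
      using loc_diff[OF loc_const loc_cmult[OF lw], of 2 "2*pi"] unfolding loc_def by blast
    show "set_integrable lborel {-pi..pi} (\<lambda>x. (1/(2*pi)) * ?f x)"
      using loc_cmult[OF lf, of "1/(2*pi)"] unfolding loc_def by blast
    show "AE x\<in>{-pi..pi} in lborel. 2 - 2*pi * w x \<le> (1/(2*pi)) * ?f x"
      using ae
    proof eventually_elim
      fix x assume "w x \<noteq> 0"
      then have wp: "w x > 0" using w0'[of x] by simp
      have "2 - 2*pi * w x \<le> 1 / (2*pi * w x)" by (rule amgm2) (use wp in simp)
      also have "\<dots> = (1/(2*pi)) * ?f x" by (simp add: field_simps)
      finally show "x \<in> {-pi..pi} \<longrightarrow> 2 - 2*pi * w x \<le> (1/(2*pi)) * ?f x" by simp
    qed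
  qed
  have lowL: "II (\<lambda>x. 2 - 2*pi * w x) (-pi) pi = 2*pi"
    using II_diff[OF loc_const loc_cmult[OF lw], of 2 "2*pi" "-pi" pi] II_const[of "-pi" pi 2]
      II_cmult[of "2*pi" w "-pi" pi] Iw by simp
  have lowR: "II (\<lambda>x. (1/(2*pi)) * ?f x) (-pi) pi = II ?f (-pi) pi / (2*pi)"
    unfolding II_cmult by simp
  have "2*pi \<le> II ?f (-pi) pi / (2*pi)" using low lowL lowR by simp
  then have LB: "(2*pi)^2 \<le> II ?f (-pi) pi" by (simp add: power2_eq_square le_divide_eq mult.commute)
  have UB0: "II ?f (-pi) pi \<le> (2*pi)^2 * (1 + 96 * t * s)"
  proof (rule field_le_epsilon)
    fix e :: real assume e: "e > 0"
    define K where "K = (2*pi)^2 * 24 * (2 * t + 2 * s + 1)"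
    have K: "K > 0" using t0 s0 by (simp add: K_def)
    define dd where "dd = min 1 (e / K)"
    have dd: "dd > 0" "dd \<le> 1" "dd \<le> e / K" using e K by (auto simp: dd_def)
    have U: "II ?f (-pi) pi \<le> (2*pi)^2 * (1 + 24 * (2 * t + dd) * (2 * s + dd))"
      by (rule upper_delta[OF w0' lw lf oscw oscf t0 s0 Iw dd(1)])
    have "(2 * t + dd) * (2 * s + dd) = 4 * t * s + dd * (2 * t + 2 * s + dd)" by (simp add: algebra_simps)
    also have "\<dots> \<le> 4 * t * s + dd * (2 * t + 2 * s + 1)" using dd t0 s0 by (intro add_left_mono mult_left_mono) auto
    finally have P: "(2 * t + dd) * (2 * s + dd) \<le> 4 * t * s + dd * (2 * t + 2 * s + 1)" .
    have "(2*pi)^2 * (1 + 24 * (2 * t + dd) * (2 * s + dd)) \<le> (2*pi)^2 * (1 + 24 * (4 * t * s + dd * (2 * t + 2 * s + 1)))"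
    proof -
      have "24 * ((2 * t + dd) * (2 * s + dd)) \<le> 24 * (4 * t * s + dd * (2 * t + 2 * s + 1))"
        using P by simp
      then have "1 + 24 * (2 * t + dd) * (2 * s + dd) \<le> 1 + 24 * (4 * t * s + dd * (2 * t + 2 * s + 1))"
        by (metis add_left_mono mult.assoc)
      then show ?thesis by (intro mult_left_mono) auto
    qed
    also have "\<dots> = (2*pi)^2 * (1 + 96 * t * s) + dd * K" by (simp add: K_def algebra_simps)
    also have "dd * K \<le> e" using dd(3) K by (simp add: le_divide_eq)
    finally show "II ?f (-pi) pi \<le> (2*pi)^2 * (1 + 96 * t * s) + e" using U by linarith
  qed
  have "(2*pi)^2 * (1 + 96 * t * s) \<le> 96 * (2*pi)^2 * (1 + (1 + t) * s)"
  proof -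
    have "1 + 96 * t * s \<le> 96 * (1 + (1 + t) * s)" using t0 s0 by (simp add: algebra_simps)
    then show ?thesis by (simp add: mult_left_mono)
  qed
  with UB0 LB show ?thesis unfolding Lf by linarith
qed

theorem lemma3p3:
  shows "\<exists>C>0. \<forall>(w :: real \<Rightarrow> real) (t :: real) (s :: real).
     periodic_2pi w \<and> (\<forall>x. w x \<ge> 0) \<and> (AE x in lborel. w x \<noteq> 0) \<and>
     bmo_norm w = ereal t \<and> bmo_norm (\<lambda>x. inverse (w x)) = ereal s \<and>
     set_integrable lborel {-pi..pi} w \<and> L1_norm_T w = 1
     \<longrightarrow> (2 * pi)\<^sup>2 \<le> L1_norm_T (\<lambda>x. inverse (w x)) \<and>
         L1_norm_T (\<lambda>x. inverse (w x)) \<le> C * (1 + (1 + t) * s)"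
proof (intro exI[of _ "96 * (2*pi)^2"] conjI allI impI)
  show "0 < 96 * (2*pi)^2" by simp
  fix w :: "real \<Rightarrow> real" and t s :: real
  assume H: "periodic_2pi w \<and> (\<forall>x. w x \<ge> 0) \<and> (AE x in lborel. w x \<noteq> 0) \<and>
     bmo_norm w = ereal t \<and> bmo_norm (\<lambda>x. inverse (w x)) = ereal s \<and>
     set_integrable lborel {-pi..pi} w \<and> L1_norm_T w = 1"
  have M: "(2*pi)^2 \<le> L1_norm_T (\<lambda>x. inverse (w x)) \<and> L1_norm_T (\<lambda>x. inverse (w x)) \<le> 96 * (2*pi)^2 * (1 + (1 + t) * s)"
    by (rule main_bound) (use H in auto)
  then show "(2 * pi)\<^sup>2 \<le> L1_norm_T (\<lambda>x. inverse (w x))" by simp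
  from M show "L1_norm_T (\<lambda>x. inverse (w x)) \<le> 96 * (2*pi)^2 * (1 + (1 + t) * s)" by simp
qed



end
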